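(* Let $k$ be a positive integer and let $G$ be a graph on $m\ge NPO(k)$ vertices. Let $d_1\ge d_2\ge\cdots\ge d_m$ be the vertex degrees of $G$ and $\lambda_1\ge\lambda_2\ge\cdots\ge\lambda_m$ the eigenvalues of the Laplacian matrix $L(G)$. Then $\lambda_k\ge d_{NPO(k)}$.
   Context: All graphs are finite, simple, unweighted and undirected; $A(G)$ denotes the adjacency matrix and $L(G)=D(G)-A(G)$ the Laplacian matrix, where $D(G)$ is the diagonal matrix of vertex degrees. Eigenvalues are counted with multiplicity. For a positive integer $k$, $NPO(k)$ is the smallest integer $n$ such that the adjacency matrix of every graph with at least $n$ vertices has at least $k$ nonpositive eigenvalues. *)

theory Defs
  imports "Jordan_Normal_Form.Char_Poly" "HOL-Library.Multiset"
begin

text \<open>A finite simple graph on the vertex set {0..<n}, given by a symmetric,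
  irreflexive adjacency relation E (only its restriction to {0..<n} matters).\<close>
definition simple_graph :: "nat \<Rightarrow> (nat \<Rightarrow> nat \<Rightarrow> bool) \<Rightarrow> bool" where
  "simple_graph n E \<longleftrightarrow> (\<forall>i<n. \<forall>j<n. E i j \<longleftrightarrow> E j i) \<and> (\<forall>i<n. \<not> E i i)"

definition adj_matrix :: "nat \<Rightarrow> (nat \<Rightarrow> nat \<Rightarrow> bool) \<Rightarrow> real mat" where
  "adj_matrix n E = mat n n (\<lambda>(i,j). if E i j then 1 else 0)"

definition degree :: "nat \<Rightarrow> (nat \<Rightarrow> nat \<Rightarrow> bool) \<Rightarrow> nat \<Rightarrow> nat" where
  "degree n E i = card {j. j < n \<and> E i j}"

definition deg_matrix :: "nat \<Rightarrow> (nat \<Rightarrow> nat \<Rightarrow> bool) \<Rightarrow> real mat" where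
  "deg_matrix n E = mat n n (\<lambda>(i,j). if i = j then real (degree n E i) else 0)"

definition laplacian :: "nat \<Rightarrow> (nat \<Rightarrow> nat \<Rightarrow> bool) \<Rightarrow> real mat" where
  "laplacian n E = deg_matrix n E - adj_matrix n E"

text \<open>For the real symmetric matrices considered here, all
  eigenvalues are real, so this is the full spectrum.\<close>
definition eigenvalues_mset :: "real mat \<Rightarrow> real multiset" where
  "eigenvalues_mset A = proots (char_poly A)"

text \<open>Eigenvalues in non-increasing order: entry i (0-based) is lambda_(i+1).\<close>
definition eigs_desc :: "real mat \<Rightarrow> real list" where
  "eigs_desc A = rev (sorted_list_of_multiset (eigenvalues_mset A))"

text \<open>Degrees in non-increasing order: entry i (0-based) is d_(i+1).\<close>
definition degs_desc :: "nat \<Rightarrow> (nat \<Rightarrow> nat \<Rightarrow> bool) \<Rightarrow> nat list" where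
  "degs_desc n E = rev (sort (map (degree n E) [0..<n]))"

definition num_nonpos_eigs :: "real mat \<Rightarrow> nat" where
  "num_nonpos_eigs A = size (filter_mset (\<lambda>x. x \<le> 0) (eigenvalues_mset A))"

definition NPO :: "nat \<Rightarrow> nat" where
  "NPO k = (LEAST n. \<forall>m E. n \<le> m \<longrightarrow> simple_graph m E \<longrightarrow>
                          k \<le> num_nonpos_eigs (adj_matrix m E))"

end

theory Submission
  imports Defs "HOL-Computational_Algebra.Fundamental_Theorem_Algebra"
    "Jordan_Normal_Form.Schur_Decomposition" "HOL-Library.Ramsey"
begin


lemma complex_eigen_exists:
  fixes A :: "complex mat"
  assumes A: "A \<in> carrier_mat n n" and n: "n > 0"
  shows "\<exists>z w. w \<in> carrier_vec n \<and> w \<noteq> 0\<^sub>v n \<and> A *\<^sub>v w = z \<cdot>\<^sub>v w"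
proof -
  have "Polynomial.degree (char_poly A) = n" using degree_monic_char_poly[OF A] by auto
  hence "\<not> constant (poly (char_poly A))" using n by (simp add: constant_degree)
  then obtain z where "poly (char_poly A) z = 0" using fundamental_theorem_of_algebra by blast
  hence "eigenvalue A z" using eigenvalue_root_char_poly[OF A] by auto
  then obtain w where "eigenvector A w z" unfolding eigenvalue_def by auto
  thus ?thesis unfolding eigenvector_def using A by auto
qed

lemma real_eigen_exists:
  fixes A :: "real mat"
  assumes A: "A \<in> carrier_mat n n" and n: "n > 0" and sym: "transpose_mat A = A"
  shows "\<exists>e u. u \<in> carrier_vec n \<and> u \<noteq> 0\<^sub>v n \<and> A *\<^sub>v u = e \<cdot>\<^sub>v u"
proof -
  define Ac where "Ac = mat n n (\<lambda>(i,j). complex_of_real (A $$ (i,j)))"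
  have Ac: "Ac \<in> carrier_mat n n" using A unfolding Ac_def by auto
  obtain z w where w: "w \<in> carrier_vec n" "w \<noteq> 0\<^sub>v n" and ev: "Ac *\<^sub>v w = z \<cdot>\<^sub>v w"
    using complex_eigen_exists[OF Ac n] by blast
  have symA: "\<And>i j. i < n \<Longrightarrow> j < n \<Longrightarrow> A $$ (i,j) = A $$ (j,i)"
    using sym A by (metis carrier_matD index_transpose_mat(1))
  have evi: "\<And>i. i < n \<Longrightarrow> (\<Sum>j<n. of_real (A $$ (i,j)) * w $ j) = z * w $ i"
  proof -
    fix i assume i: "i < n"
    have "(Ac *\<^sub>v w) $ i = z * w $ i" using ev i w by simp
    moreover have "(Ac *\<^sub>v w) $ i = (\<Sum>j<n. of_real (A $$ (i,j)) * w $ j)"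
      using i A w Ac unfolding Ac_def row_def
      by (auto intro!: sum.cong simp: lessThan_atLeast0 scalar_prod_def)
    ultimately show "(\<Sum>j<n. of_real (A $$ (i,j)) * w $ j) = z * w $ i" by simp
  qed
  define s where "s = (\<Sum>i<n. cnj (w $ i) * (\<Sum>j<n. of_real (A $$ (i,j)) * w $ j))"
  define N where "N = (\<Sum>i<n. cnj (w $ i) * w $ i)"
  have sN: "s = z * N" unfolding s_def N_def using evi
    by (simp add: sum_distrib_left mult.assoc mult.left_commute)
  have "cnj s = (\<Sum>i<n. \<Sum>j<n. w $ i * of_real (A $$ (i,j)) * cnj (w $ j))"
    unfolding s_def by (simp add: sum_distrib_left mult.assoc)
  also have "\<dots> = (\<Sum>j<n. \<Sum>i<n. w $ i * of_real (A $$ (i,j)) * cnj (w $ j))"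
    by (rule sum.swap)
  also have "\<dots> = s" unfolding s_def sum_distrib_left
    by (intro sum.cong refl, simp add: symA mult.commute mult.left_commute)
  finally have sreal: "cnj s = s" .
  have Nreal: "cnj N = N" unfolding N_def by (simp add: mult.commute)
  obtain i0 where i0: "i0 < n" "w $ i0 \<noteq> 0"
  proof -
    have "\<exists>i<n. w $ i \<noteq> 0"
    proof (rule ccontr)
      assume "\<not> ?thesis"
      hence "w = 0\<^sub>v n" using w(1) by (intro eq_vecI, auto)
      thus False using w(2) by simp
    qed
    thus ?thesis using that by blast
  qed
  have Npos: "Re N > 0"
  proof -
    have "Re N = (\<Sum>i<n. (cmod (w $ i))^2)" unfolding N_def
      by (simp add: complex_mult_cnj cmod_def power2_eq_square)
    also have "\<dots> > 0"
      by (rule sum_pos2[of _ i0], insert i0, auto)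
    finally show ?thesis .
  qed
  have N0: "N \<noteq> 0" using Npos by auto
  have "cnj z * N = z * N" using sreal Nreal sN by (metis complex_cnj_mult)
  hence zreal: "cnj z = z" using N0 by simp
  hence imz: "Im z = 0" by (metis complex_cnj_cancel_iff complex.sel(2) cnj.sel(2) neg_equal_zero)
  define a where "a = vec n (\<lambda>j. Re (w $ j))"
  define b where "b = vec n (\<lambda>j. Im (w $ j))"
  have Aa: "A *\<^sub>v a = Re z \<cdot>\<^sub>v a" and Ab: "A *\<^sub>v b = Re z \<cdot>\<^sub>v b"
  proof -
    have "\<And>i. i < n \<Longrightarrow> (A *\<^sub>v a) $ i = Re z * a $ i \<and> (A *\<^sub>v b) $ i = Re z * b $ i"
    proof -
      fix i assume i: "i < n"
      have "Re (\<Sum>j<n. of_real (A $$ (i,j)) * w $ j) = (\<Sum>j<n. A $$ (i,j) * Re (w $ j))"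
           "Im (\<Sum>j<n. of_real (A $$ (i,j)) * w $ j) = (\<Sum>j<n. A $$ (i,j) * Im (w $ j))"
        by (simp_all add: Re_sum Im_sum)
      moreover have "Re (z * w $ i) = Re z * Re (w $ i)" "Im (z * w $ i) = Re z * Im (w $ i)"
        using imz by simp_all
      moreover have "(A *\<^sub>v a) $ i = (\<Sum>j<n. A $$ (i,j) * Re (w $ j))"
          "(A *\<^sub>v b) $ i = (\<Sum>j<n. A $$ (i,j) * Im (w $ j))"
        using i A unfolding a_def b_def scalar_prod_def
        by (auto intro!: sum.cong simp: lessThan_atLeast0 scalar_prod_def)
      ultimately show "(A *\<^sub>v a) $ i = Re z * a $ i \<and> (A *\<^sub>v b) $ i = Re z * b $ i"
        using evi[OF i] i unfolding a_def b_def by auto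
    qed
    thus "A *\<^sub>v a = Re z \<cdot>\<^sub>v a" "A *\<^sub>v b = Re z \<cdot>\<^sub>v b"
      using A by (auto intro!: eq_vecI simp: a_def b_def)
  qed
  have "a \<noteq> 0\<^sub>v n \<or> b \<noteq> 0\<^sub>v n"
  proof (rule ccontr)
    assume "\<not> ?thesis"
    hence "a $ i0 = 0" "b $ i0 = 0" using i0 by auto
    hence "w $ i0 = 0" using i0 unfolding a_def b_def by (simp add: complex_eq_iff)
    thus False using i0 by simp
  qed
  moreover have "a \<in> carrier_vec n" "b \<in> carrier_vec n" unfolding a_def b_def by auto
  ultimately show ?thesis using Aa Ab by blast
qed



lemma cscalar_real[simp]: "(v::real vec) \<bullet>c w = v \<bullet> w"
  by (simp add: scalar_prod_def conjugate_vec_def)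

lemma orth_complete:
  fixes v :: "real vec"
  assumes v: "v \<in> carrier_vec n" and v1: "v \<bullet> v = 1"
  shows "\<exists>W. W \<in> carrier_mat n n \<and> transpose_mat W * W = 1\<^sub>m n \<and> W * transpose_mat W = 1\<^sub>m n \<and> col W 0 = v"
proof -
  interpret cof_vec_space n "TYPE(real)" .
  have v0: "v \<noteq> 0\<^sub>v n" using v1 by auto
  define b where "b = basis_completion v"
  from basis_completion[OF v v0, folded b_def]
  have dist_b: "distinct b" and indep: "\<not> lin_dep (set b)" and bc: "set b \<subseteq> carrier_vec n"
    and len_b: "length b = n" by auto
  have hdb: "b = v # tl b" unfolding b_def basis_completion_def Let_def by simp
  define ws where "ws = gram_schmidt n b"
  from gram_schmidt_result[OF bc dist_b indep refl, folded ws_def]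
  have ws: "set ws \<subseteq> carrier_vec n" "corthogonal ws" "length ws = n" by (auto simp: len_b)
  have hdws: "hd ws = v" unfolding ws_def by (subst hdb, rule gram_schmidt_hd[OF v])
  define us where "us = map (\<lambda>w. (1 / sqrt (w \<bullet> w)) \<cdot>\<^sub>v w) ws"
  have lus: "length us = n" unfolding us_def using ws by simp
  have usc: "\<And>i. i < n \<Longrightarrow> us ! i \<in> carrier_vec n" unfolding us_def using ws
    by (auto simp: nth_mem subset_iff)
  have wsc: "\<And>i. i < n \<Longrightarrow> ws ! i \<in> carrier_vec n" using ws by (auto simp: nth_mem subset_iff)
  have orth: "\<And>i j. i < n \<Longrightarrow> j < n \<Longrightarrow> us ! i \<bullet> us ! j = (if i = j then 1 else 0)"
  proof -
    fix i j assume i: "i < n" and j: "j < n"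
    have ij: "ws ! i \<bullet> ws ! j = 0 \<longleftrightarrow> i \<noteq> j" using corthogonalD[OF ws(2)] ws(3) i j by simp
    have "us ! i \<bullet> us ! j = (1 / sqrt (ws!i \<bullet> ws!i)) * (1 / sqrt (ws!j \<bullet> ws!j)) * (ws ! i \<bullet> ws ! j)"
      unfolding us_def using i j ws wsc[OF i] wsc[OF j] by simp
    also have "\<dots> = (if i = j then 1 else 0)"
    proof (cases "i = j")
      case True
      have pos: "ws!i \<bullet> ws!i \<ge> 0" unfolding scalar_prod_def by (intro sum_nonneg, simp)
      have ne: "ws!i \<bullet> ws!i \<noteq> 0" using ij True by simp
      have "(1 / sqrt (ws!i \<bullet> ws!i)) * (1 / sqrt (ws!i \<bullet> ws!i)) * (ws!i \<bullet> ws!i) = 1"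
      proof -
        have s: "sqrt (ws!i \<bullet> ws!i) * sqrt (ws!i \<bullet> ws!i) = ws!i \<bullet> ws!i" using pos by simp
        have "sqrt (ws!i \<bullet> ws!i) \<noteq> 0" using ne pos by simp
        thus ?thesis using s ne by (simp add: field_simps)
      qed
      thus ?thesis using True by simp
    next
      case False thus ?thesis using ij by simp
    qed
    finally show "us ! i \<bullet> us ! j = (if i = j then 1 else 0)" .
  qed
  define W where "W = mat_of_cols n us"
  have W: "W \<in> carrier_mat n n" unfolding W_def using mat_of_cols_carrier(1)[of n us] lus by simp
  have colW: "\<And>i. i < n \<Longrightarrow> col W i = us ! i" unfolding W_def using lus usc
    by (simp add: col_mat_of_cols)
  have WW: "transpose_mat W * W = 1\<^sub>m n"
    by (rule eq_matI, insert W colW orth, auto)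
  have WW': "W * transpose_mat W = 1\<^sub>m n"
    by (rule mat_mult_left_right_inverse[OF _ W WW], insert W, auto)
  have n0: "n > 0" using v v1 by (cases n) (auto simp: scalar_prod_def)
  have "us ! 0 = v"
  proof -
    have "ws ! 0 = v" using hdws ws(3) n0 by (metis hd_conv_nth list.size(3) neq0_conv)
    thus ?thesis unfolding us_def using n0 ws(3) v1 by simp
  qed
  thus ?thesis using W WW WW' colW n0 by auto
qed



lemma quad_entry:
  fixes A W :: "real mat"
  assumes A: "A \<in> carrier_mat n n" and W: "W \<in> carrier_mat n n" and i: "i < n" and j: "j < n"
  shows "(transpose_mat W * A * W) $$ (i,j) = col W i \<bullet> (A *\<^sub>v col W j)"
proof -
  have "(transpose_mat W * A * W) $$ (i,j) = (transpose_mat W * (A * W)) $$ (i,j)"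
    using A W by (subst assoc_mult_mat[of _ n n _ n _ n], auto)
  also have "\<dots> = col W i \<bullet> col (A * W) j" using A W i j by simp
  also have "col (A * W) j = A *\<^sub>v col W j" using A W j by (intro eq_vecI, auto)
  finally show ?thesis .
qed

lemma spectral:
  fixes A :: "real mat"
  assumes "A \<in> carrier_mat n n" "transpose_mat A = A"
  shows "\<exists>U D. similar_mat_wit A D U (transpose_mat U) \<and> diagonal_mat D"
  using assms
proof (induction n arbitrary: A)
  case 0
  hence "similar_mat_wit A A (1\<^sub>m 0) (transpose_mat (1\<^sub>m 0))"
    using similar_mat_wit_refl[OF "0.prems"(1)] by simp
  moreover have "diagonal_mat A" using "0.prems" unfolding diagonal_mat_def by auto
  ultimately show ?case by blast
next
  case (Suc n)
  note A = Suc.prems(1) and symA = Suc.prems(2)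
  obtain e u where u: "u \<in> carrier_vec (Suc n)" "u \<noteq> 0\<^sub>v (Suc n)" and Au: "A *\<^sub>v u = e \<cdot>\<^sub>v u"
    using real_eigen_exists[OF A _ symA] by auto
  have upos: "u \<bullet> u > 0"
  proof -
    obtain i where i: "i < Suc n" "u $ i \<noteq> 0"
    proof -
      have "\<exists>i<Suc n. u $ i \<noteq> 0"
      proof (rule ccontr)
        assume "\<not> ?thesis"
        hence "u = 0\<^sub>v (Suc n)" using u(1) by (intro eq_vecI, auto)
        thus False using u(2) by simp
      qed
      thus ?thesis using that by blast
    qed
    have "u \<bullet> u = (\<Sum>j\<in>{0..<Suc n}. u $ j * u $ j)" using u(1) by (simp add: scalar_prod_def)
    also have "\<dots> > 0" by (rule sum_pos2[of _ i], insert i, auto simp: zero_less_mult_iff linorder_neq_iff)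
    finally show ?thesis .
  qed
  define v where "v = (1 / sqrt (u \<bullet> u)) \<cdot>\<^sub>v u"
  have v: "v \<in> carrier_vec (Suc n)" unfolding v_def using u by simp
  have v1: "v \<bullet> v = 1"
  proof -
    have "v \<bullet> v = (1 / sqrt (u \<bullet> u)) * (1 / sqrt (u \<bullet> u)) * (u \<bullet> u)"
      unfolding v_def using u by simp
    also have "\<dots> = 1"
    proof -
      have s: "sqrt (u \<bullet> u) * sqrt (u \<bullet> u) = u \<bullet> u" using upos by simp
      have "sqrt (u \<bullet> u) \<noteq> 0" using upos by simp
      thus ?thesis using s upos by (simp add: field_simps)
    qed
    finally show ?thesis .
  qed
  have Av: "A *\<^sub>v v = e \<cdot>\<^sub>v v" unfolding v_def using A u Au
    by (simp add: mult_mat_vec smult_smult_assoc mult.commute)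
  obtain W where W: "W \<in> carrier_mat (Suc n) (Suc n)" and WW: "transpose_mat W * W = 1\<^sub>m (Suc n)"
    and WW': "W * transpose_mat W = 1\<^sub>m (Suc n)" and W0: "col W 0 = v"
    using orth_complete[OF v v1] by blast
  define A' where "A' = transpose_mat W * A * W"
  have A': "A' \<in> carrier_mat (Suc n) (Suc n)" unfolding A'_def using A W by auto
  have colW: "\<And>i j. i < Suc n \<Longrightarrow> j < Suc n \<Longrightarrow> col W i \<bullet> col W j = (if i = j then 1 else 0)"
  proof -
    fix i j assume "i < Suc n" "j < Suc n"
    hence "(transpose_mat W * W) $$ (i,j) = col W i \<bullet> col W j" using W by simp
    thus "col W i \<bullet> col W j = (if i = j then 1 else 0)" unfolding WW using \<open>i < Suc n\<close> \<open>j < Suc n\<close> by simp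
  qed
  have simA: "similar_mat_wit A A' W (transpose_mat W)"
  proof (rule similar_mat_witI[OF WW' WW _ A A' W])
    show "A = W * A' * transpose_mat W" unfolding A'_def using A W WW'
      by (simp add: assoc_mult_mat[of _ "Suc n" "Suc n" _ "Suc n" _ "Suc n"]
          flip: assoc_mult_mat[of W "Suc n" "Suc n" "transpose_mat W" "Suc n" A "Suc n"])
    show "transpose_mat W \<in> carrier_mat (Suc n) (Suc n)" using W by simp
  qed
  have symA': "transpose_mat A' = A'"
  proof -
    have AW: "A * W \<in> carrier_mat (Suc n) (Suc n)" using A W by simp
    have "transpose_mat A' = transpose_mat (transpose_mat W * (A * W))" unfolding A'_def
      using A W by (subst assoc_mult_mat[of _ "Suc n" "Suc n" _ "Suc n" _ "Suc n"], auto)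
    also have "\<dots> = transpose_mat (A * W) * W"
      using transpose_mult[of "transpose_mat W" "Suc n" "Suc n" "A * W" "Suc n"] W AW by simp
    also have "transpose_mat (A * W) = transpose_mat W * A"
      using transpose_mult[OF A W] symA by simp
    finally show ?thesis unfolding A'_def .
  qed
  have col0: "\<And>i. i < Suc n \<Longrightarrow> A' $$ (i,0) = (if i = 0 then e else 0)"
  proof -
    fix i assume i: "i < Suc n"
    have "A' $$ (i,0) = col W i \<bullet> (A *\<^sub>v col W 0)" unfolding A'_def by (rule quad_entry[OF A W i], simp)
    also have "\<dots> = e * (col W i \<bullet> col W 0)" unfolding W0 Av using v W i by simp
    also have "\<dots> = (if i = 0 then e else 0)" using colW[OF i, of 0] W0 by simp
    finally show "A' $$ (i,0) = (if i = 0 then e else 0)" .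
  qed
  have row0: "\<And>j. j < Suc n \<Longrightarrow> A' $$ (0,j) = (if j = 0 then e else 0)"
  proof -
    fix j assume j: "j < Suc n"
    have "A' $$ (0,j) = transpose_mat A' $$ (j,0)" using A' j by simp
    thus "A' $$ (0,j) = (if j = 0 then e else 0)" using col0[OF j] symA' by simp
  qed
  define A1 :: "real mat" where "A1 = mat 1 1 (\<lambda>_. e)"
  define A3 where "A3 = mat n n (\<lambda>(i,j). A' $$ (Suc i, Suc j))"
  have A1: "A1 \<in> carrier_mat 1 1" unfolding A1_def by simp
  have A3: "A3 \<in> carrier_mat n n" unfolding A3_def by simp
  have A'block: "A' = four_block_mat A1 (0\<^sub>m 1 n) (0\<^sub>m n 1) A3"
  proof (rule eq_matI)
    fix i j assume i: "i < dim_row (four_block_mat A1 (0\<^sub>m 1 n) (0\<^sub>m n 1) A3)"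
      and j: "j < dim_col (four_block_mat A1 (0\<^sub>m 1 n) (0\<^sub>m n 1) A3)"
    hence i': "i < Suc n" and j': "j < Suc n" using A1 A3 by auto
    show "A' $$ (i, j) = four_block_mat A1 (0\<^sub>m 1 n) (0\<^sub>m n 1) A3 $$ (i, j)"
      using i' j' A1 A3 col0 row0
      by (cases i; cases j; auto simp: A1_def A3_def)
  qed (insert A' A1 A3, auto)
  have symA3: "transpose_mat A3 = A3"
  proof (rule eq_matI)
    fix i j assume "i < dim_row A3" "j < dim_col A3"
    hence i: "i < n" and j: "j < n" using A3 by auto
    have "A' $$ (Suc j, Suc i) = transpose_mat A' $$ (Suc i, Suc j)" using A' i j by simp
    thus "transpose_mat A3 $$ (i, j) = A3 $$ (i, j)" using symA' i j unfolding A3_def by simp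
  qed (insert A3, auto)
  obtain U3 D3 where sim3: "similar_mat_wit A3 D3 U3 (transpose_mat U3)" and diag3: "diagonal_mat D3"
    using Suc.IH[OF A3 symA3] by blast
  note w3 = similar_mat_witD2[OF A3 sim3]
  have sim': "similar_mat_wit A' (four_block_mat A1 (0\<^sub>m 1 n) (0\<^sub>m n 1) D3)
     (four_block_mat (1\<^sub>m 1) (0\<^sub>m 1 n) (0\<^sub>m n 1) U3) (four_block_mat (1\<^sub>m 1) (0\<^sub>m 1 n) (0\<^sub>m n 1) (transpose_mat U3))"
    unfolding A'block
    by (rule similar_mat_wit_four_block[OF similar_mat_wit_refl[OF A1] sim3 _ _ A1 A3],
        insert w3, auto)
  define P' where "P' = four_block_mat (1\<^sub>m 1) (0\<^sub>m 1 n) (0\<^sub>m n 1) U3"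
  have P'c: "P' \<in> carrier_mat (Suc n) (Suc n)" unfolding P'_def using w3 by auto
  have tP': "transpose_mat P' = four_block_mat (1\<^sub>m 1) (0\<^sub>m 1 n) (0\<^sub>m n 1) (transpose_mat U3)"
    unfolding P'_def using w3 by (subst transpose_four_block_mat, auto)
  define D where "D = four_block_mat A1 (0\<^sub>m 1 n) (0\<^sub>m n 1) D3"
  have sim'': "similar_mat_wit A' D P' (transpose_mat P')" unfolding tP' using sim' unfolding D_def P'_def .
  have "similar_mat_wit A D (W * P') (transpose_mat P' * transpose_mat W)"
    by (rule similar_mat_wit_trans[OF simA sim''])
  also have "transpose_mat P' * transpose_mat W = transpose_mat (W * P')"
    using W P'c by (simp add: transpose_mult)
  finally have simAD: "similar_mat_wit A D (W * P') (transpose_mat (W * P'))" .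
  have "diagonal_mat D"
    unfolding diagonal_mat_def
  proof (intro allI impI)
    fix i j assume i: "i < dim_row D" and j: "j < dim_col D" and ij: "i \<noteq> j"
    have D3: "D3 \<in> carrier_mat n n" using w3 by auto
    show "D $$ (i,j) = 0" using i j ij D3 A1 diag3 unfolding D_def diagonal_mat_def
      by (cases i; cases j; auto simp: A1_def)
  qed
  thus ?case using simAD by blast
qed



lemma proots_lin_prod: "proots (\<Prod>a\<leftarrow>xs. [:- a, 1:]) = mset (xs :: real list)"
proof (induction xs)
  case Nil thus ?case by simp
next
  case (Cons x xs)
  have "0 \<notin> set (map (\<lambda>a. [:- a, 1:]) xs)" by auto
  hence "(\<Prod>a\<leftarrow>xs. [:- a, 1:]) \<noteq> (0 :: real poly)"
    by (simp add: prod_list_zero_iff del: set_map)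
  moreover have "[:- x, 1:] \<noteq> (0 :: real poly)" by simp
  ultimately have "proots ([:- x, 1:] * (\<Prod>a\<leftarrow>xs. [:- a, 1:])) = proots [:- x, 1:] + mset xs"
    using proots_mult Cons.IH by metis
  moreover have "(\<Prod>a\<leftarrow>x#xs. [:- a, 1:]) = [:- x, 1:] * (\<Prod>a\<leftarrow>xs. [:- a, 1:])" by simp
  ultimately show ?case using proots_linear_factor[of "-x"] by simp
qed

lemma eig_mset_spectral:
  fixes A :: "real mat"
  assumes A: "A \<in> carrier_mat n n" and sim: "similar_mat_wit A D U (transpose_mat U)"
    and diag: "diagonal_mat D"
  shows "eigenvalues_mset A = mset (diag_mat D)"
proof -
  have D: "D \<in> carrier_mat n n" using similar_mat_witD2[OF A sim] by auto
  have "char_poly A = char_poly D" by (rule char_poly_similar, unfold similar_mat_def, insert sim, blast)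
  also have "\<dots> = (\<Prod>a\<leftarrow>diag_mat D. [:- a, 1:])"
    by (rule char_poly_upper_triangular[OF D], insert diag D, auto simp: diagonal_mat_def upper_triangular_def)
  finally show ?thesis unfolding eigenvalues_mset_def by (simp add: proots_lin_prod)
qed

lemma count_diag:
  fixes D :: "real mat"
  assumes D: "D \<in> carrier_mat n n"
  shows "size (filter_mset P (mset (diag_mat D))) = card {i. i < n \<and> P (D $$ (i,i))}"
proof -
  have "size (filter_mset P (mset (diag_mat D))) = length (filter P (diag_mat D))"
    by (metis mset_filter size_mset)
  also have "\<dots> = card {i. i < n \<and> P (D $$ (i,i))}"
    unfolding length_filter_conv_card diag_mat_def using D
    by (intro arg_cong[where f=card] Collect_cong) auto
  finally show ?thesis .
qed

lemma diag_mult_vec: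
  fixes D :: "real mat"
  assumes D: "D \<in> carrier_mat n n" and diag: "diagonal_mat D" and y: "y \<in> carrier_vec n" and i: "i < n"
  shows "(D *\<^sub>v y) $ i = D $$ (i,i) * y $ i"
proof -
  have "(D *\<^sub>v y) $ i = (\<Sum>j\<in>{0..<n}. D $$ (i,j) * y $ j)"
    using D y i by (simp add: scalar_prod_def)
  also have "\<dots> = D $$ (i,i) * y $ i"
  proof -
    have "(\<Sum>j\<in>{0..<n}. D $$ (i,j) * y $ j) = (\<Sum>j\<in>{0..<n}. if j = i then D $$ (i,i) * y $ i else 0)"
      by (rule sum.cong, insert D diag i, auto simp: diagonal_mat_def)
    also have "\<dots> = D $$ (i,i) * y $ i" using i by simp
    finally show ?thesis .
  qed
  finally show ?thesis .
qed

lemma diag_quad: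
  fixes D :: "real mat"
  assumes D: "D \<in> carrier_mat n n" and diag: "diagonal_mat D" and y: "y \<in> carrier_vec n"
  shows "y \<bullet> (D *\<^sub>v y) = (\<Sum>i\<in>{0..<n}. D $$ (i,i) * (y $ i)^2)"
  unfolding scalar_prod_def using D y diag_mult_vec[OF D diag y]
  by (auto intro!: sum.cong simp: power2_eq_square)

lemma kernel_exists:
  fixes R :: "real mat"
  assumes R: "R \<in> carrier_mat r c" and rc: "r < c"
  shows "\<exists>z. z \<in> carrier_vec c \<and> z \<noteq> 0\<^sub>v c \<and> R *\<^sub>v z = 0\<^sub>v r"
proof -
  define B where "B = mat c c (\<lambda>(i,j). if i < r then R $$ (i,j) else 0)"
  have Bc: "B \<in> carrier_mat c c" unfolding B_def by simp
  have "B = mat\<^sub>r c c (\<lambda>i. if i = c - 1 then 0\<^sub>v c else row B i)"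
    by (rule eq_matI, insert rc, auto simp: B_def)
  hence "det B = 0" using det_row_0[of "c - 1" c "\<lambda>i. row B i"] rc Bc by auto
  then obtain z where z: "z \<in> carrier_vec c" "z \<noteq> 0\<^sub>v c" "B *\<^sub>v z = 0\<^sub>v c"
    using det_0_iff_vec_prod_zero_field[OF Bc] by auto
  have "R *\<^sub>v z = 0\<^sub>v r"
  proof (rule eq_vecI)
    fix i assume "i < dim_vec (0\<^sub>v r)"
    hence i: "i < r" by simp
    have "(B *\<^sub>v z) $ i = 0" using z(3) i rc by simp
    moreover have "(B *\<^sub>v z) $ i = (R *\<^sub>v z) $ i"
      using i rc R z(1) by (simp add: B_def row_def scalar_prod_def)
    ultimately show "(R *\<^sub>v z) $ i = 0\<^sub>v r $ i" using i by simp
  qed (insert R, simp)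
  thus ?thesis using z by blast
qed

lemma orth_quad:
  fixes M U D :: "real mat"
  assumes M: "M \<in> carrier_mat n n" and sim: "similar_mat_wit M D U (transpose_mat U)"
    and y: "y \<in> carrier_vec n"
  shows "(U *\<^sub>v y) \<bullet> (M *\<^sub>v (U *\<^sub>v y)) = y \<bullet> (D *\<^sub>v y)"
    and "(U *\<^sub>v y) \<bullet> (U *\<^sub>v y) = y \<bullet> y"
proof -
  note w = similar_mat_witD2[OF M sim]
  have U: "U \<in> carrier_mat n n" and D: "D \<in> carrier_mat n n" and UU: "transpose_mat U * U = 1\<^sub>m n"
    and MD: "M = U * D * transpose_mat U" using w by auto
  have gen: "\<And>a b. a \<in> carrier_vec n \<Longrightarrow> b \<in> carrier_vec n \<Longrightarrow> (U *\<^sub>v a) \<bullet> (U *\<^sub>v b) = a \<bullet> b"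
  proof -
    fix a b :: "real vec" assume a: "a \<in> carrier_vec n" and b: "b \<in> carrier_vec n"
    have "(U *\<^sub>v a) \<bullet> (U *\<^sub>v b) = (transpose_mat U *\<^sub>v (U *\<^sub>v a)) \<bullet> b"
      using transpose_vec_mult_scalar[OF U b, of "U *\<^sub>v a"] U a by simp
    also have "transpose_mat U *\<^sub>v (U *\<^sub>v a) = (transpose_mat U * U) *\<^sub>v a" using U a by simp
    also have "\<dots> = a" using UU a by simp
    finally show "(U *\<^sub>v a) \<bullet> (U *\<^sub>v b) = a \<bullet> b" .
  qed
  have "M *\<^sub>v (U *\<^sub>v y) = U *\<^sub>v (D *\<^sub>v y)"
  proof -
    have Uy: "transpose_mat U *\<^sub>v (U *\<^sub>v y) = y"
    proof -
      have "transpose_mat U *\<^sub>v (U *\<^sub>v y) = (transpose_mat U * U) *\<^sub>v y"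
        using U y by (simp add: assoc_mult_mat_vec)
      thus ?thesis using UU y by simp
    qed
    have "M *\<^sub>v (U *\<^sub>v y) = U *\<^sub>v (D *\<^sub>v (transpose_mat U *\<^sub>v (U *\<^sub>v y)))"
    proof -
      have DU: "D * transpose_mat U \<in> carrier_mat n n" using D U by simp
      have tU: "transpose_mat U \<in> carrier_mat n n" using U by simp
      have Uyc: "U *\<^sub>v y \<in> carrier_vec n" using U y by simp
      show ?thesis unfolding MD
        using assoc_mult_mat_vec[OF U DU Uyc] assoc_mult_mat_vec[OF D tU Uyc]
          assoc_mult_mat[OF U D tU] by simp
    qed
    thus ?thesis unfolding Uy .
  qed
  thus "(U *\<^sub>v y) \<bullet> (M *\<^sub>v (U *\<^sub>v y)) = y \<bullet> (D *\<^sub>v y)" using gen[OF y, of "D *\<^sub>v y"] D y by simp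
  show "(U *\<^sub>v y) \<bullet> (U *\<^sub>v y) = y \<bullet> y" using gen[OF y y] .
qed



lemma count_ge:
  fixes M X :: "real mat"
  assumes M: "M \<in> carrier_mat n n" and symM: "transpose_mat M = M"
    and X: "X \<in> carrier_mat n k"
    and inj: "\<And>z. z \<in> carrier_vec k \<Longrightarrow> X *\<^sub>v z = 0\<^sub>v n \<Longrightarrow> z = 0\<^sub>v k"
    and q: "\<And>z. z \<in> carrier_vec k \<Longrightarrow> c * ((X *\<^sub>v z) \<bullet> (X *\<^sub>v z)) \<le> (X *\<^sub>v z) \<bullet> (M *\<^sub>v (X *\<^sub>v z))"
  shows "k \<le> size (filter_mset (\<lambda>x. c \<le> x) (eigenvalues_mset M))"
proof -
  obtain U D where sim: "similar_mat_wit M D U (transpose_mat U)" and diag: "diagonal_mat D"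
    using spectral[OF M symM] by blast
  note w = similar_mat_witD2[OF M sim]
  have U: "U \<in> carrier_mat n n" and D: "D \<in> carrier_mat n n" and UU': "U * transpose_mat U = 1\<^sub>m n"
    using w by auto
  have tU: "transpose_mat U \<in> carrier_mat n n" using U by simp
  define T where "T = {i. i < n \<and> c \<le> D $$ (i,i)}"
  have cnt: "size (filter_mset (\<lambda>x. c \<le> x) (eigenvalues_mset M)) = card T"
    unfolding eig_mset_spectral[OF M sim diag] count_diag[OF D] T_def ..
  show ?thesis
  proof (rule ccontr)
    assume "\<not> ?thesis"
    hence lt: "card T < k" unfolding cnt by simp
    have finT: "finite T" unfolding T_def by simp
    define ts where "ts = sorted_list_of_set T"
    have ts: "set ts = T" "length ts = card T" unfolding ts_def using finT by auto
    define Y where "Y = transpose_mat U * X"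
    have Y: "Y \<in> carrier_mat n k" unfolding Y_def using U X by simp
    define R where "R = mat (card T) k (\<lambda>(a,j). Y $$ (ts ! a, j))"
    have R: "R \<in> carrier_mat (card T) k" unfolding R_def by simp
    obtain z where z: "z \<in> carrier_vec k" "z \<noteq> 0\<^sub>v k" and Rz: "R *\<^sub>v z = 0\<^sub>v (card T)"
      using kernel_exists[OF R lt] by blast
    define x where "x = X *\<^sub>v z"
    have x: "x \<in> carrier_vec n" unfolding x_def using X z by simp
    have x0: "x \<noteq> 0\<^sub>v n" using inj[OF z(1)] z(2) unfolding x_def by blast
    define y where "y = transpose_mat U *\<^sub>v x"
    have y: "y \<in> carrier_vec n" unfolding y_def using U x by simp
    have Uy: "U *\<^sub>v y = x"
    proof -
      have "U *\<^sub>v y = (U * transpose_mat U) *\<^sub>v x" unfolding y_def using U x tU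
        by (simp add: assoc_mult_mat_vec)
      thus ?thesis using UU' x by simp
    qed
    have yT: "\<And>i. i \<in> T \<Longrightarrow> y $ i = 0"
    proof -
      fix i assume "i \<in> T"
      then obtain a where a: "a < length ts" "ts ! a = i" using ts(1) by (metis in_set_conv_nth)
      have iT: "i < n" using \<open>i \<in> T\<close> unfolding T_def by simp
      have "y = Y *\<^sub>v z" unfolding y_def x_def Y_def using U X z tU by (simp add: assoc_mult_mat_vec)
      hence "y $ i = row Y i \<bullet> z" using iT Y by simp
      also have "row Y i = row R a" using a ts Y R iT unfolding R_def by (auto intro!: eq_vecI)
      also have "row R a \<bullet> z = (R *\<^sub>v z) $ a" using a ts R by simp
      also have "\<dots> = 0" using Rz a ts by simp
      finally show "y $ i = 0" .
    qed
    have y0: "y \<noteq> 0\<^sub>v n" using x0 Uy U by auto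
    obtain i0 where i0: "i0 < n" "y $ i0 \<noteq> 0"
    proof -
      have "\<exists>i<n. y $ i \<noteq> 0"
      proof (rule ccontr)
        assume "\<not> ?thesis"
        hence "y = 0\<^sub>v n" using y by (intro eq_vecI, auto)
        thus False using y0 by simp
      qed
      thus ?thesis using that by blast
    qed
    have i0T: "i0 \<notin> T" using yT i0 by blast
    have "y \<bullet> (D *\<^sub>v y) = (\<Sum>i\<in>{0..<n}. D $$ (i,i) * (y $ i)^2)" by (rule diag_quad[OF D diag y])
    also have "\<dots> < (\<Sum>i\<in>{0..<n}. c * (y $ i)^2)"
    proof (rule sum_strict_mono_ex1)
      show "\<forall>i\<in>{0..<n}. D $$ (i,i) * (y $ i)^2 \<le> c * (y $ i)^2"
      proof
        fix i assume i: "i \<in> {0..<n}"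
        show "D $$ (i,i) * (y $ i)^2 \<le> c * (y $ i)^2"
        proof (cases "i \<in> T")
          case True thus ?thesis using yT by simp
        next
          case False hence "D $$ (i,i) < c" using i unfolding T_def by auto
          thus ?thesis by (intro mult_right_mono, auto)
        qed
      qed
      show "\<exists>i\<in>{0..<n}. D $$ (i,i) * (y $ i)^2 < c * (y $ i)^2"
      proof (intro bexI)
        have "D $$ (i0,i0) < c" using i0T i0 unfolding T_def by auto
        moreover have "(y $ i0)^2 > 0" using i0 by simp
        ultimately show "D $$ (i0,i0) * (y $ i0)^2 < c * (y $ i0)^2" by simp
      qed (insert i0, simp)
    qed simp
    also have "\<dots> = c * (y \<bullet> y)" using y by (simp add: scalar_prod_def sum_distrib_left power2_eq_square)
    finally have "y \<bullet> (D *\<^sub>v y) < c * (y \<bullet> y)" .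
    moreover have "x \<bullet> (M *\<^sub>v x) = y \<bullet> (D *\<^sub>v y)" "x \<bullet> x = y \<bullet> y"
      using orth_quad[OF M sim y] unfolding Uy by auto
    moreover have "c * (x \<bullet> x) \<le> x \<bullet> (M *\<^sub>v x)" using q[OF z(1)] unfolding x_def .
    ultimately show False by simp
  qed
qed

lemma count_le:
  fixes M X :: "real mat"
  assumes M: "M \<in> carrier_mat n n" and symM: "transpose_mat M = M"
    and X: "X \<in> carrier_mat n k"
    and inj: "\<And>z. z \<in> carrier_vec k \<Longrightarrow> X *\<^sub>v z = 0\<^sub>v n \<Longrightarrow> z = 0\<^sub>v k"
    and q: "\<And>z. z \<in> carrier_vec k \<Longrightarrow> (X *\<^sub>v z) \<bullet> (M *\<^sub>v (X *\<^sub>v z)) \<le> c * ((X *\<^sub>v z) \<bullet> (X *\<^sub>v z))"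
  shows "k \<le> size (filter_mset (\<lambda>x. x \<le> c) (eigenvalues_mset M))"
proof -
  obtain U D where sim: "similar_mat_wit M D U (transpose_mat U)" and diag: "diagonal_mat D"
    using spectral[OF M symM] by blast
  note w = similar_mat_witD2[OF M sim]
  have U: "U \<in> carrier_mat n n" and D: "D \<in> carrier_mat n n" and UU': "U * transpose_mat U = 1\<^sub>m n"
    using w by auto
  have tU: "transpose_mat U \<in> carrier_mat n n" using U by simp
  define T where "T = {i. i < n \<and> D $$ (i,i) \<le> c}"
  have cnt: "size (filter_mset (\<lambda>x. x \<le> c) (eigenvalues_mset M)) = card T"
    unfolding eig_mset_spectral[OF M sim diag] count_diag[OF D] T_def ..
  show ?thesis
  proof (rule ccontr)
    assume "\<not> ?thesis"
    hence lt: "card T < k" unfolding cnt by simp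
    have finT: "finite T" unfolding T_def by simp
    define ts where "ts = sorted_list_of_set T"
    have ts: "set ts = T" "length ts = card T" unfolding ts_def using finT by auto
    define Y where "Y = transpose_mat U * X"
    have Y: "Y \<in> carrier_mat n k" unfolding Y_def using U X by simp
    define R where "R = mat (card T) k (\<lambda>(a,j). Y $$ (ts ! a, j))"
    have R: "R \<in> carrier_mat (card T) k" unfolding R_def by simp
    obtain z where z: "z \<in> carrier_vec k" "z \<noteq> 0\<^sub>v k" and Rz: "R *\<^sub>v z = 0\<^sub>v (card T)"
      using kernel_exists[OF R lt] by blast
    define x where "x = X *\<^sub>v z"
    have x: "x \<in> carrier_vec n" unfolding x_def using X z by simp
    have x0: "x \<noteq> 0\<^sub>v n" using inj[OF z(1)] z(2) unfolding x_def by blast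
    define y where "y = transpose_mat U *\<^sub>v x"
    have y: "y \<in> carrier_vec n" unfolding y_def using U x by simp
    have Uy: "U *\<^sub>v y = x"
    proof -
      have "U *\<^sub>v y = (U * transpose_mat U) *\<^sub>v x" unfolding y_def using U x tU
        by (simp add: assoc_mult_mat_vec)
      thus ?thesis using UU' x by simp
    qed
    have yT: "\<And>i. i \<in> T \<Longrightarrow> y $ i = 0"
    proof -
      fix i assume "i \<in> T"
      then obtain a where a: "a < length ts" "ts ! a = i" using ts(1) by (metis in_set_conv_nth)
      have iT: "i < n" using \<open>i \<in> T\<close> unfolding T_def by simp
      have "y = Y *\<^sub>v z" unfolding y_def x_def Y_def using U X z tU by (simp add: assoc_mult_mat_vec)
      hence "y $ i = row Y i \<bullet> z" using iT Y by simp
      also have "row Y i = row R a" using a ts Y R iT unfolding R_def by (auto intro!: eq_vecI)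
      also have "row R a \<bullet> z = (R *\<^sub>v z) $ a" using a ts R by simp
      also have "\<dots> = 0" using Rz a ts by simp
      finally show "y $ i = 0" .
    qed
    have y0: "y \<noteq> 0\<^sub>v n" using x0 Uy U by auto
    obtain i0 where i0: "i0 < n" "y $ i0 \<noteq> 0"
    proof -
      have "\<exists>i<n. y $ i \<noteq> 0"
      proof (rule ccontr)
        assume "\<not> ?thesis"
        hence "y = 0\<^sub>v n" using y by (intro eq_vecI, auto)
        thus False using y0 by simp
      qed
      thus ?thesis using that by blast
    qed
    have i0T: "i0 \<notin> T" using yT i0 by blast
    have "y \<bullet> (D *\<^sub>v y) = (\<Sum>i\<in>{0..<n}. D $$ (i,i) * (y $ i)^2)" by (rule diag_quad[OF D diag y])
    also have "\<dots> > (\<Sum>i\<in>{0..<n}. c * (y $ i)^2)"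
    proof (rule sum_strict_mono_ex1)
      show "\<forall>i\<in>{0..<n}. c * (y $ i)^2 \<le> D $$ (i,i) * (y $ i)^2"
      proof
        fix i assume i: "i \<in> {0..<n}"
        show "c * (y $ i)^2 \<le> D $$ (i,i) * (y $ i)^2"
        proof (cases "i \<in> T")
          case True thus ?thesis using yT by simp
        next
          case False hence "c < D $$ (i,i)" using i unfolding T_def by auto
          thus ?thesis by (intro mult_right_mono, auto)
        qed
      qed
      show "\<exists>i\<in>{0..<n}. c * (y $ i)^2 < D $$ (i,i) * (y $ i)^2"
      proof (intro bexI)
        have "c < D $$ (i0,i0)" using i0T i0 unfolding T_def by auto
        moreover have "(y $ i0)^2 > 0" using i0 by simp
        ultimately show "c * (y $ i0)^2 < D $$ (i0,i0) * (y $ i0)^2" by simp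
      qed (insert i0, simp)
    qed simp
    also have "(\<Sum>i\<in>{0..<n}. c * (y $ i)^2) = c * (y \<bullet> y)" using y by (simp add: scalar_prod_def sum_distrib_left power2_eq_square)
    finally have "y \<bullet> (D *\<^sub>v y) > c * (y \<bullet> y)" .
    moreover have "x \<bullet> (M *\<^sub>v x) = y \<bullet> (D *\<^sub>v y)" "x \<bullet> x = y \<bullet> y"
      using orth_quad[OF M sim y] unfolding Uy by auto
    moreover have "x \<bullet> (M *\<^sub>v x) \<le> c * (x \<bullet> x)" using q[OF z(1)] unfolding x_def .
    ultimately show False by simp
  qed
qed

lemma count_le_construct:
  fixes M :: "real mat"
  assumes M: "M \<in> carrier_mat n n" and symM: "transpose_mat M = M"
    and k: "k \<le> size (filter_mset (\<lambda>x. x \<le> 0) (eigenvalues_mset M))"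
  shows "\<exists>X. X \<in> carrier_mat n k \<and> (\<forall>z\<in>carrier_vec k. X *\<^sub>v z = 0\<^sub>v n \<longrightarrow> z = 0\<^sub>v k)
     \<and> (\<forall>z\<in>carrier_vec k. (X *\<^sub>v z) \<bullet> (M *\<^sub>v (X *\<^sub>v z)) \<le> 0)"
proof -
  obtain U D where sim: "similar_mat_wit M D U (transpose_mat U)" and diag: "diagonal_mat D"
    using spectral[OF M symM] by blast
  note w = similar_mat_witD2[OF M sim]
  have U: "U \<in> carrier_mat n n" and D: "D \<in> carrier_mat n n" and UU: "transpose_mat U * U = 1\<^sub>m n"
    using w by auto
  have tU: "transpose_mat U \<in> carrier_mat n n" using U by simp
  define T where "T = {i. i < n \<and> D $$ (i,i) \<le> 0}"
  have cnt: "size (filter_mset (\<lambda>x. x \<le> 0) (eigenvalues_mset M)) = card T"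
    unfolding eig_mset_spectral[OF M sim diag] count_diag[OF D] T_def ..
  have finT: "finite T" unfolding T_def by simp
  define ts where "ts = take k (sorted_list_of_set T)"
  have ts: "set ts \<subseteq> T" "length ts = k" "distinct ts" unfolding ts_def using finT k cnt
    by (auto dest: in_set_takeD)
  have tsn: "\<And>a. a < k \<Longrightarrow> ts ! a < n" using ts unfolding T_def by (auto dest!: nth_mem)
  define S where "S = mat n k (\<lambda>(i,a). if i = ts ! a then 1 else (0::real))"
  have S: "S \<in> carrier_mat n k" unfolding S_def by simp
  have Sz: "\<And>z i. z \<in> carrier_vec k \<Longrightarrow> i < n \<Longrightarrow> (S *\<^sub>v z) $ i = (if i \<in> set ts then z $ (SOME a. a < k \<and> ts ! a = i) else 0)"
  proof -
    fix z :: "real vec" and i assume z: "z \<in> carrier_vec k" and i: "i < n"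
    have "(S *\<^sub>v z) $ i = (\<Sum>a\<in>{0..<k}. (if i = ts ! a then 1 else 0) * z $ a)"
      using S z i unfolding S_def by (simp add: scalar_prod_def)
    also have "\<dots> = (if i \<in> set ts then z $ (SOME a. a < k \<and> ts ! a = i) else 0)"
    proof (cases "i \<in> set ts")
      case True
      then obtain b where b: "b < k" "ts ! b = i" using ts by (metis in_set_conv_nth)
      have uniq: "\<And>a. a < k \<Longrightarrow> ts ! a = i \<longleftrightarrow> a = b" using b ts nth_eq_iff_index_eq by metis
      have some: "(SOME a. a < k \<and> ts ! a = i) = b" using uniq b by (intro some_equality, auto)
      have "(\<Sum>a\<in>{0..<k}. (if i = ts ! a then 1 else 0) * z $ a) = (\<Sum>a\<in>{0..<k}. if a = b then z $ a else 0)"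
      proof (rule sum.cong[OF refl])
        fix a assume "a \<in> {0..<k}"
        hence "(i = ts ! a) \<longleftrightarrow> a = b" using uniq by auto
        thus "(if i = ts ! a then 1 else 0) * z $ a = (if a = b then z $ a else 0)" by simp
      qed
      also have "\<dots> = z $ b" using b by simp
      finally show ?thesis using True some by simp
    next
      case False
      hence "\<And>a. a < k \<Longrightarrow> i \<noteq> ts ! a" using ts by auto
      thus ?thesis using False by (auto intro!: sum.neutral)
    qed
    finally show "(S *\<^sub>v z) $ i = (if i \<in> set ts then z $ (SOME a. a < k \<and> ts ! a = i) else 0)" .
  qed
  define X where "X = U * S"
  have X: "X \<in> carrier_mat n k" unfolding X_def using U S by simp
  have Xz: "\<And>z. z \<in> carrier_vec k \<Longrightarrow> X *\<^sub>v z = U *\<^sub>v (S *\<^sub>v z)" unfolding X_def using U S by simp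
  have inj: "\<forall>z\<in>carrier_vec k. X *\<^sub>v z = 0\<^sub>v n \<longrightarrow> z = 0\<^sub>v k"
  proof (intro ballI impI)
    fix z :: "real vec" assume z: "z \<in> carrier_vec k" and X0: "X *\<^sub>v z = 0\<^sub>v n"
    have Szc: "S *\<^sub>v z \<in> carrier_vec n" using S z by simp
    have "S *\<^sub>v z = (transpose_mat U * U) *\<^sub>v (S *\<^sub>v z)" using UU Szc by simp
    also have "\<dots> = transpose_mat U *\<^sub>v (X *\<^sub>v z)" using Xz[OF z] U tU Szc by (simp add: assoc_mult_mat_vec)
    also have "\<dots> = 0\<^sub>v n" unfolding X0 using tU by (auto intro!: eq_vecI)
    finally have S0: "S *\<^sub>v z = 0\<^sub>v n" .
    show "z = 0\<^sub>v k"
    proof (rule eq_vecI)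
      fix a assume "a < dim_vec (0\<^sub>v k)"
      hence a: "a < k" by simp
      have uniq: "\<And>b. b < k \<Longrightarrow> ts ! b = ts ! a \<longleftrightarrow> b = a" using a ts nth_eq_iff_index_eq by metis
      have some: "(SOME b. b < k \<and> ts ! b = ts ! a) = a" using uniq a by (intro some_equality, auto)
      have "(S *\<^sub>v z) $ (ts ! a) = z $ a" using Sz[OF z tsn[OF a]] a ts some by auto
      thus "z $ a = 0\<^sub>v k $ a" using S0 tsn[OF a] a by simp
    qed (insert z, simp)
  qed
  have quad: "\<forall>z\<in>carrier_vec k. (X *\<^sub>v z) \<bullet> (M *\<^sub>v (X *\<^sub>v z)) \<le> 0"
  proof
    fix z :: "real vec" assume z: "z \<in> carrier_vec k"
    define y where "y = S *\<^sub>v z"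
    have y: "y \<in> carrier_vec n" unfolding y_def using S z by simp
    have "(X *\<^sub>v z) \<bullet> (M *\<^sub>v (X *\<^sub>v z)) = y \<bullet> (D *\<^sub>v y)"
      unfolding Xz[OF z] y_def[symmetric] by (rule orth_quad(1)[OF M sim y])
    also have "\<dots> = (\<Sum>i\<in>{0..<n}. D $$ (i,i) * (y $ i)^2)" by (rule diag_quad[OF D diag y])
    also have "\<dots> \<le> 0"
    proof (rule sum_nonpos)
      fix i assume i: "i \<in> {0..<n}"
      show "D $$ (i,i) * (y $ i)^2 \<le> 0"
      proof (cases "i \<in> set ts")
        case True hence "D $$ (i,i) \<le> 0" using ts unfolding T_def by auto
        thus ?thesis by (simp add: mult_nonpos_nonneg)
      next
        case False hence "y $ i = 0" using Sz[OF z] i unfolding y_def by simp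
        thus ?thesis by simp
      qed
    qed
    finally show "(X *\<^sub>v z) \<bullet> (M *\<^sub>v (X *\<^sub>v z)) \<le> 0" .
  qed
  show ?thesis using X inj quad by blast
qed



lemma rev_sorted_desc:
  fixes xs :: "'a :: linorder list"
  assumes "sorted xs" "i \<le> j" "j < length xs"
  shows "rev xs ! j \<le> rev xs ! i"
  using assms by (simp add: rev_nth sorted_nth_mono)

lemma desc_nth_ge:
  fixes ys :: "'a :: linorder list"
  assumes s: "sorted (rev ys)" and k0: "0 < k" and k: "k \<le> length (filter (\<lambda>x. c \<le> x) ys)"
  shows "c \<le> ys ! (k - 1)"
proof (rule ccontr)
  assume "\<not> ?thesis"
  hence lt: "ys ! (k - 1) < c" by simp
  have sub: "{j. j < length ys \<and> c \<le> ys ! j} \<subseteq> {0..<k-1}"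
  proof
    fix j assume j: "j \<in> {j. j < length ys \<and> c \<le> ys ! j}"
    show "j \<in> {0..<k-1}"
    proof (rule ccontr)
      assume "j \<notin> {0..<k-1}"
      hence "k - 1 \<le> j" by simp
      hence "ys ! j \<le> ys ! (k - 1)" using rev_sorted_desc[OF s, of "k-1" j] j by simp
      hence "ys ! j < c" using lt by (rule le_less_trans)
      thus False using j leD by blast
    qed
  qed
  have "length (filter (\<lambda>x. c \<le> x) ys) = card {j. j < length ys \<and> c \<le> ys ! j}"
    by (rule length_filter_conv_card)
  also have "\<dots> \<le> card {0..<k-1}" using card_mono[OF finite_atLeastLessThan sub] .
  finally show False using k k0 by simp
qed

lemma desc_count:
  fixes xs :: "'a :: linorder list"
  assumes N0: "0 < N" and N: "N \<le> length xs"
  shows "N \<le> card {i. i < length xs \<and> rev (sort xs) ! (N - 1) \<le> xs ! i}"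
proof -
  define ys where "ys = rev (sort xs)"
  define d where "d = ys ! (N - 1)"
  have ly: "length ys = length xs" unfolding ys_def by simp
  have sy: "sorted (rev ys)" unfolding ys_def by simp
  have "{0..<N} \<subseteq> {j. j < length ys \<and> d \<le> ys ! j}"
  proof
    fix j assume "j \<in> {0..<N}"
    hence j: "j < N" by simp
    have "ys ! (N - 1) \<le> ys ! j" using rev_sorted_desc[OF sy, of j "N - 1"] j N ly by simp
    thus "j \<in> {j. j < length ys \<and> d \<le> ys ! j}" using j N ly unfolding d_def by simp
  qed
  hence "N \<le> card {j. j < length ys \<and> d \<le> ys ! j}"
  proof -
    have fin: "finite {j. j < length ys \<and> d \<le> ys ! j}" by simp
    show ?thesis using card_mono[OF fin \<open>{0..<N} \<subseteq> _\<close>] by simp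
  qed
  also have "\<dots> = length (filter (\<lambda>x. d \<le> x) ys)" by (rule length_filter_conv_card[symmetric])
  also have "\<dots> = length (filter (\<lambda>x. d \<le> x) xs)"
  proof -
    have "mset (filter (\<lambda>x. d \<le> x) ys) = mset (filter (\<lambda>x. d \<le> x) xs)"
      unfolding ys_def by (simp add: mset_filter)
    thus ?thesis by (metis size_mset)
  qed
  also have "\<dots> = card {i. i < length xs \<and> d \<le> xs ! i}" by (rule length_filter_conv_card)
  finally show ?thesis unfolding d_def ys_def .
qed

lemma adj_sym:
  assumes "simple_graph n E"
  shows "transpose_mat (adj_matrix n E) = adj_matrix n E"
proof (rule eq_matI)
  fix i j assume "i < dim_row (adj_matrix n E)" "j < dim_col (adj_matrix n E)"
  hence i: "i < n" and j: "j < n" unfolding adj_matrix_def by auto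
  have "E j i = E i j" using assms i j unfolding simple_graph_def by blast
  thus "transpose_mat (adj_matrix n E) $$ (i, j) = adj_matrix n E $$ (i, j)"
    using i j unfolding adj_matrix_def by simp
qed (auto simp: adj_matrix_def)

lemma adj_carrier[simp]: "adj_matrix n E \<in> carrier_mat n n"
  unfolding adj_matrix_def by simp

lemma lap_carrier[simp]: "laplacian n E \<in> carrier_mat n n"
  unfolding laplacian_def by (rule minus_carrier_mat, unfold adj_matrix_def, simp)

lemma lap_dims[simp]: "dim_row (laplacian n E) = n" "dim_col (laplacian n E) = n"
  using lap_carrier[of n E] by (auto simp del: lap_carrier)

lemma adj_dims[simp]: "dim_row (adj_matrix n E) = n" "dim_col (adj_matrix n E) = n"
  unfolding adj_matrix_def by auto

lemma lap_entry:
  "i < n \<Longrightarrow> j < n \<Longrightarrow> laplacian n E $$ (i,j) =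
     (if i = j then real (degree n E i) else 0) - (if E i j then 1 else 0)"
  unfolding laplacian_def deg_matrix_def adj_matrix_def by simp

lemma lap_sym:
  assumes "simple_graph n E"
  shows "transpose_mat (laplacian n E) = laplacian n E"
proof -
  have L: "laplacian n E \<in> carrier_mat n n" by simp
  show ?thesis
  proof (rule eq_matI)
    fix i j assume "i < dim_row (laplacian n E)" "j < dim_col (laplacian n E)"
    hence i: "i < n" and j: "j < n" using L by auto
    show "transpose_mat (laplacian n E) $$ (i, j) = laplacian n E $$ (i, j)"
    proof -
      have "E j i = E i j" using assms i j unfolding simple_graph_def by blast
      moreover have "transpose_mat (laplacian n E) $$ (i, j) = laplacian n E $$ (j, i)"
        using i j carrier_matD[OF L] by (subst index_transpose_mat, auto)
      ultimately show ?thesis using i j by (simp add: lap_entry)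
    qed
  qed (insert L, auto)
qed

lemma quad_sum:
  fixes A :: "real mat"
  assumes A: "A \<in> carrier_mat n n" and x: "x \<in> carrier_vec n"
  shows "x \<bullet> (A *\<^sub>v x) = (\<Sum>i\<in>{0..<n}. \<Sum>j\<in>{0..<n}. x $ i * A $$ (i,j) * x $ j)"
proof -
  have "x \<bullet> (A *\<^sub>v x) = (\<Sum>i\<in>{0..<n}. x $ i * (A *\<^sub>v x) $ i)"
    using A unfolding scalar_prod_def by simp
  also have "\<dots> = (\<Sum>i\<in>{0..<n}. x $ i * (\<Sum>j\<in>{0..<n}. A $$ (i,j) * x $ j))"
    by (rule sum.cong[OF refl], insert A x, simp add: scalar_prod_def)
  also have "\<dots> = (\<Sum>i\<in>{0..<n}. \<Sum>j\<in>{0..<n}. x $ i * A $$ (i,j) * x $ j)"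
    by (simp add: sum_distrib_left mult.assoc)
  finally show ?thesis .
qed



lemma homog_nonpos:
  assumes sg: "simple_graph m E" and R: "R \<subseteq> {0..<m}" and cR: "card R = Suc k"
    and hom: "\<forall>u\<in>R. \<forall>v\<in>R. u \<noteq> v \<longrightarrow> (E u v \<longleftrightarrow> b)"
  shows "k \<le> num_nonpos_eigs (adj_matrix m E)"
proof -
  define A where "A = adj_matrix m E"
  have A: "A \<in> carrier_mat m m" unfolding A_def by simp
  have symA: "transpose_mat A = A" unfolding A_def by (rule adj_sym[OF sg])
  have finR: "finite R" using R finite_subset by blast
  define rs where "rs = sorted_list_of_set R"
  have rs: "set rs = R" "length rs = Suc k" "distinct rs" unfolding rs_def using finR cR by auto
  have rsm: "\<And>a. a \<le> k \<Longrightarrow> rs ! a < m" using rs R by (metis atLeastLessThan_iff le_imp_less_Suc nth_mem subsetD)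
  have rsinj: "\<And>a b. a \<le> k \<Longrightarrow> b \<le> k \<Longrightarrow> rs ! a = rs ! b \<longleftrightarrow> a = b"
    using rs by (simp add: nth_eq_iff_index_eq)
  define X where "X = mat m k (\<lambda>(i,a). if i = rs ! a then 1 else if i = rs ! k then -1 else (0::real))"
  have X: "X \<in> carrier_mat m k" unfolding X_def by simp
  have Xz: "\<And>z i. z \<in> carrier_vec k \<Longrightarrow> i < m \<Longrightarrow> (X *\<^sub>v z) $ i = (\<Sum>a\<in>{0..<k}. X $$ (i,a) * z $ a)"
    using X by (simp add: scalar_prod_def)
  have yb: "\<And>z b. z \<in> carrier_vec k \<Longrightarrow> b < k \<Longrightarrow> (X *\<^sub>v z) $ (rs ! b) = z $ b"
  proof -
    fix z :: "real vec" and b assume z: "z \<in> carrier_vec k" and b: "b < k"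
    have "(X *\<^sub>v z) $ (rs ! b) = (\<Sum>a\<in>{0..<k}. X $$ (rs ! b,a) * z $ a)" using Xz[OF z rsm] b by simp
    also have "\<dots> = (\<Sum>a\<in>{0..<k}. if a = b then z $ a else 0)"
    proof (rule sum.cong[OF refl])
      fix a assume "a \<in> {0..<k}"
      hence a: "a < k" by simp
      have "rs ! b = rs ! a \<longleftrightarrow> a = b" using rsinj[of b a] a b by auto
      moreover have "rs ! b \<noteq> rs ! k" using rsinj[of b k] b by auto
      ultimately show "X $$ (rs ! b, a) * z $ a = (if a = b then z $ a else 0)"
        unfolding X_def using a b rsm[of b] by auto
    qed
    also have "\<dots> = z $ b" using b by simp
    finally show "(X *\<^sub>v z) $ (rs ! b) = z $ b" .
  qed
  have yk: "\<And>z. z \<in> carrier_vec k \<Longrightarrow> (X *\<^sub>v z) $ (rs ! k) = - (\<Sum>a\<in>{0..<k}. z $ a)"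
  proof -
    fix z :: "real vec" assume z: "z \<in> carrier_vec k"
    have "(X *\<^sub>v z) $ (rs ! k) = (\<Sum>a\<in>{0..<k}. X $$ (rs ! k,a) * z $ a)" using Xz[OF z rsm] by simp
    also have "\<dots> = (\<Sum>a\<in>{0..<k}. - z $ a)"
    proof (rule sum.cong[OF refl])
      fix a assume "a \<in> {0..<k}"
      hence a: "a < k" by simp
      have "rs ! k \<noteq> rs ! a" using rsinj[of k a] a by auto
      thus "X $$ (rs ! k, a) * z $ a = - z $ a" unfolding X_def using a rsm[of k] by auto
    qed
    also have "\<dots> = - (\<Sum>a\<in>{0..<k}. z $ a)" by (simp add: sum_negf)
    finally show "(X *\<^sub>v z) $ (rs ! k) = - (\<Sum>a\<in>{0..<k}. z $ a)" .
  qed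
  have yout: "\<And>z i. z \<in> carrier_vec k \<Longrightarrow> i < m \<Longrightarrow> i \<notin> R \<Longrightarrow> (X *\<^sub>v z) $ i = 0"
  proof -
    fix z :: "real vec" and i assume z: "z \<in> carrier_vec k" and i: "i < m" and iR: "i \<notin> R"
    have ne: "\<And>a. a \<le> k \<Longrightarrow> i \<noteq> rs ! a" using iR rs by (metis le_imp_less_Suc nth_mem)
    have "(X *\<^sub>v z) $ i = (\<Sum>a\<in>{0..<k}. X $$ (i,a) * z $ a)" using Xz[OF z i] .
    also have "\<dots> = 0"
      by (rule sum.neutral, insert ne i, auto simp: X_def)
    finally show "(X *\<^sub>v z) $ i = 0" .
  qed
  have Rset: "R = (\<lambda>a. rs ! a) ` {0..<Suc k}" using rs by (auto simp: set_conv_nth)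
  have injrs: "inj_on (\<lambda>a. rs ! a) {0..<Suc k}" using rs by (simp add: inj_on_nth)
  have inj: "\<And>z. z \<in> carrier_vec k \<Longrightarrow> X *\<^sub>v z = 0\<^sub>v m \<Longrightarrow> z = 0\<^sub>v k"
  proof -
    fix z :: "real vec" assume z: "z \<in> carrier_vec k" and X0: "X *\<^sub>v z = 0\<^sub>v m"
    show "z = 0\<^sub>v k"
    proof (rule eq_vecI)
      fix b assume "b < dim_vec (0\<^sub>v k)"
      hence b: "b < k" by simp
      have "z $ b = (X *\<^sub>v z) $ (rs ! b)" using yb[OF z b] by simp
      also have "\<dots> = 0" unfolding X0 using rsm[of b] b by simp
      finally show "z $ b = 0\<^sub>v k $ b" using b by simp
    qed (insert z, simp)
  qed
  have quad: "\<And>z. z \<in> carrier_vec k \<Longrightarrow> (X *\<^sub>v z) \<bullet> (A *\<^sub>v (X *\<^sub>v z)) \<le> 0 * ((X *\<^sub>v z) \<bullet> (X *\<^sub>v z))"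
  proof -
    fix z :: "real vec" assume z: "z \<in> carrier_vec k"
    define y where "y = X *\<^sub>v z"
    have y: "y \<in> carrier_vec m" unfolding y_def using X z by simp
    have y0: "\<And>i. i < m \<Longrightarrow> i \<notin> R \<Longrightarrow> y $ i = 0" unfolding y_def using yout[OF z] by blast
    have Aij: "\<And>i j. i \<in> R \<Longrightarrow> j \<in> R \<Longrightarrow> A $$ (i,j) = (if i = j then 0 else if b then 1 else 0)"
    proof -
      fix i j assume i: "i \<in> R" and j: "j \<in> R"
      have im: "i < m" and jm: "j < m" using i j R by auto
      show "A $$ (i,j) = (if i = j then 0 else if b then 1 else 0)"
        using hom i j im jm sg unfolding A_def adj_matrix_def simple_graph_def by auto
    qed
    have "y \<bullet> (A *\<^sub>v y) = (\<Sum>i\<in>{0..<m}. \<Sum>j\<in>{0..<m}. y $ i * A $$ (i,j) * y $ j)"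
      by (rule quad_sum[OF A y])
    also have "\<dots> = (\<Sum>i\<in>R. \<Sum>j\<in>{0..<m}. y $ i * A $$ (i,j) * y $ j)"
      by (rule sum.mono_neutral_right, insert R y0, auto)
    also have "\<dots> = (\<Sum>i\<in>R. \<Sum>j\<in>R. y $ i * A $$ (i,j) * y $ j)"
      by (rule sum.cong[OF refl], rule sum.mono_neutral_right, insert R y0, auto)
    also have "\<dots> = (\<Sum>i\<in>R. \<Sum>j\<in>R. if b then y $ i * y $ j - (if i = j then y $ i * y $ j else 0) else 0)"
      by (intro sum.cong refl, auto simp: Aij)
    also have "\<dots> \<le> 0"
    proof (cases b)
      case False thus ?thesis by simp
    next
      case True
      have sumR: "(\<Sum>i\<in>R. y $ i) = 0"
      proof -
        have "(\<Sum>i\<in>R. y $ i) = (\<Sum>a\<in>{0..<Suc k}. y $ (rs ! a))"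
          unfolding Rset by (rule sum.reindex[OF injrs, unfolded comp_def])
        also have "\<dots> = (\<Sum>a\<in>{0..<k}. y $ (rs ! a)) + y $ (rs ! k)" by simp
        also have "(\<Sum>a\<in>{0..<k}. y $ (rs ! a)) = (\<Sum>a\<in>{0..<k}. z $ a)"
          unfolding y_def by (rule sum.cong, auto simp: yb[OF z])
        also have "y $ (rs ! k) = - (\<Sum>a\<in>{0..<k}. z $ a)" unfolding y_def by (rule yk[OF z])
        finally show ?thesis by simp
      qed
      have "(\<Sum>i\<in>R. \<Sum>j\<in>R. if b then y $ i * y $ j - (if i = j then y $ i * y $ j else 0) else 0)
          = (\<Sum>i\<in>R. \<Sum>j\<in>R. y $ i * y $ j) - (\<Sum>i\<in>R. y $ i * y $ i)"
        using True finR by (simp add: sum_subtractf)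
      also have "(\<Sum>i\<in>R. \<Sum>j\<in>R. y $ i * y $ j) = (\<Sum>i\<in>R. y $ i) * (\<Sum>j\<in>R. y $ j)"
        by (simp add: sum_product)
      also have "\<dots> = 0" using sumR by simp
      also have "(\<Sum>i\<in>R. y $ i * y $ i) \<ge> 0" by (intro sum_nonneg, simp)
      ultimately show ?thesis by linarith
    qed
    finally show "(X *\<^sub>v z) \<bullet> (A *\<^sub>v (X *\<^sub>v z)) \<le> 0 * ((X *\<^sub>v z) \<bullet> (X *\<^sub>v z))"
      unfolding y_def by simp
  qed
  have "k \<le> size (filter_mset (\<lambda>x. x \<le> 0) (eigenvalues_mset A))"
    by (rule count_le[OF A symA X inj quad])
  thus ?thesis unfolding num_nonpos_eigs_def A_def .
qed

lemma NPO_exists: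
  "\<exists>N. \<forall>m E. N \<le> m \<longrightarrow> simple_graph m E \<longrightarrow> k \<le> num_nonpos_eigs (adj_matrix m E)"
proof -
  obtain r where r: "\<forall>(V::nat set) (EE::nat set set). finite V \<and> card V \<ge> r \<longrightarrow>
    (\<exists>R \<subseteq> V. card R = Suc k \<and> clique R EE \<or> card R = Suc k \<and> indep R EE)"
    using ramsey2[of "Suc k" "Suc k"] by blast
  have "\<forall>m E. r \<le> m \<longrightarrow> simple_graph m E \<longrightarrow> k \<le> num_nonpos_eigs (adj_matrix m E)"
  proof (intro allI impI)
    fix m E assume rm: "r \<le> m" and sg: "simple_graph m E"
    define EE where "EE = {{u, v} | u v. E u v}"
    obtain R where R: "R \<subseteq> {0..<m}" "card R = Suc k" and ci: "clique R EE \<or> indep R EE"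
      using r[rule_format, of "{0..<m}" EE] rm by auto
    have symE: "\<And>u v. u < m \<Longrightarrow> v < m \<Longrightarrow> E u v \<longleftrightarrow> E v u" using sg unfolding simple_graph_def by blast
    have EEiff: "\<And>u v. u < m \<Longrightarrow> v < m \<Longrightarrow> {u, v} \<in> EE \<longleftrightarrow> E u v"
    proof -
      fix u v assume u: "u < m" and v: "v < m"
      show "{u, v} \<in> EE \<longleftrightarrow> E u v"
      proof
        assume "{u, v} \<in> EE"
        then obtain u' v' where e: "{u, v} = {u', v'}" "E u' v'" unfolding EE_def by blast
        hence "(u = u' \<and> v = v') \<or> (u = v' \<and> v = u')" by (metis doubleton_eq_iff)
        thus "E u v" using e symE u v by auto
      next
        assume "E u v" thus "{u, v} \<in> EE" unfolding EE_def by blast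
      qed
    qed
    show "k \<le> num_nonpos_eigs (adj_matrix m E)"
    proof (cases "clique R EE")
      case True
      have "\<forall>u\<in>R. \<forall>v\<in>R. u \<noteq> v \<longrightarrow> (E u v \<longleftrightarrow> True)"
      proof (intro ballI impI)
        fix u v assume u: "u \<in> R" and v: "v \<in> R" and uv: "u \<noteq> v"
        have "{u, v} \<in> EE" using True u v uv unfolding clique_def by blast
        moreover have "u < m" "v < m" using u v R(1) by auto
        ultimately show "E u v \<longleftrightarrow> True" using EEiff by blast
      qed
      thus ?thesis using homog_nonpos[OF sg R] by blast
    next
      case False
      hence "indep R EE" using ci by simp
      have "\<forall>u\<in>R. \<forall>v\<in>R. u \<noteq> v \<longrightarrow> (E u v \<longleftrightarrow> False)"
      proof (intro ballI impI)
        fix u v assume u: "u \<in> R" and v: "v \<in> R" and uv: "u \<noteq> v"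
        have "{u, v} \<notin> EE" using \<open>indep R EE\<close> u v uv unfolding indep_def by blast
        moreover have "u < m" "v < m" using u v R(1) by auto
        ultimately show "E u v \<longleftrightarrow> False" using EEiff by blast
      qed
      thus ?thesis using homog_nonpos[OF sg R] by blast
    qed
  qed
  thus ?thesis by blast
qed



lemma sel_entry:
  fixes B Pm :: "real mat"
  assumes B: "B \<in> carrier_mat m m" and Pm: "Pm \<in> carrier_mat m N"
    and cols: "\<And>a. a < N \<Longrightarrow> col Pm a = unit_vec m (ss a)"
    and ssm: "\<And>a. a < N \<Longrightarrow> ss a < m" and a: "a < N" and b: "b < N"
  shows "(transpose_mat Pm * B * Pm) $$ (a,b) = B $$ (ss a, ss b)"
proof -
  have tP: "transpose_mat Pm \<in> carrier_mat N m" using Pm by simp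
  have "(transpose_mat Pm * B * Pm) $$ (a,b) = (transpose_mat Pm * (B * Pm)) $$ (a,b)"
    using B Pm tP by (subst assoc_mult_mat[OF tP B Pm], simp)
  also have "\<dots> = col Pm a \<bullet> col (B * Pm) b" using B Pm a b by simp
  also have "col (B * Pm) b = B *\<^sub>v col Pm b" using B Pm b by (intro eq_vecI, auto)
  also have "\<dots> = B *\<^sub>v unit_vec m (ss b)" using cols[OF b] by simp
  also have "col Pm a \<bullet> (B *\<^sub>v unit_vec m (ss b)) = (B *\<^sub>v unit_vec m (ss b)) $ (ss a)"
    unfolding cols[OF a] by (rule scalar_prod_left_unit, insert B ssm[OF a], auto)
  also have "\<dots> = row B (ss a) \<bullet> unit_vec m (ss b)" using B ssm[OF a] by simp
  also have "\<dots> = row B (ss a) $ (ss b)" using ssm[OF b] by simp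
  also have "\<dots> = B $$ (ss a, ss b)" using B ssm[OF a] ssm[OF b] by simp
  finally show ?thesis .
qed

lemma NPO_prop:
  "\<forall>m E. NPO k \<le> m \<longrightarrow> simple_graph m E \<longrightarrow> k \<le> num_nonpos_eigs (adj_matrix m E)"
  unfolding NPO_def by (rule LeastI_ex[OF NPO_exists])

lemma empty_graph_eigs: "num_nonpos_eigs (adj_matrix 0 E) = 0"
proof -
  have A: "adj_matrix 0 E \<in> carrier_mat 0 0" by simp
  obtain U D where sim: "similar_mat_wit (adj_matrix 0 E) D U (transpose_mat U)" and diag: "diagonal_mat D"
    using spectral[OF A] by (metis adj_sym simple_graph_def not_less0)
  have "D \<in> carrier_mat 0 0" using similar_mat_witD2[OF A sim] by auto
  hence "diag_mat D = []" unfolding diag_mat_def by simp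
  thus ?thesis unfolding num_nonpos_eigs_def eig_mset_spectral[OF A sim diag] by simp
qed

lemma NPO_pos: assumes "0 < k" shows "0 < NPO k"
proof (rule ccontr)
  assume "\<not> 0 < NPO k"
  hence "NPO k \<le> 0" by simp
  moreover have "simple_graph 0 (\<lambda>_ _. False)" unfolding simple_graph_def by simp
  ultimately have "k \<le> num_nonpos_eigs (adj_matrix 0 (\<lambda>_ _. False))" using NPO_prop[of k] by blast
  thus False using assms empty_graph_eigs by simp
qed

theorem mainTheorem13:
  fixes k m :: nat and E :: "nat \<Rightarrow> nat \<Rightarrow> bool"
  assumes "0 < k"
    and "simple_graph m E"
    and "NPO k \<le> m"
  shows "eigs_desc (laplacian m E) ! (k - 1) \<ge> real (degs_desc m E ! (NPO k - 1))"
proof -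
  note k0 = assms(1) and sg = assms(2) and Nm = assms(3)
  define N where "N = NPO k"
  have N0: "0 < N" unfolding N_def using NPO_pos[OF k0] .
  have PN: "\<And>m' E'. N \<le> m' \<Longrightarrow> simple_graph m' E' \<Longrightarrow> k \<le> num_nonpos_eigs (adj_matrix m' E')"
    using NPO_prop[of k] unfolding N_def by blast
  define xs where "xs = map (degree m E) [0..<m]"
  define dN where "dN = degs_desc m E ! (N - 1)"
  have dN': "dN = rev (sort xs) ! (N - 1)" unfolding dN_def degs_desc_def xs_def ..
  have "N \<le> card {i. i < length xs \<and> rev (sort xs) ! (N - 1) \<le> xs ! i}"
    by (rule desc_count[OF N0], insert Nm, simp add: xs_def N_def)
  moreover have "{i. i < length xs \<and> rev (sort xs) ! (N - 1) \<le> xs ! i} = {i. i < m \<and> dN \<le> degree m E i}"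
    unfolding xs_def using dN'[unfolded xs_def] by (intro Collect_cong) auto
  ultimately have "N \<le> card {i. i < m \<and> dN \<le> degree m E i}" by simp
  then obtain S where S: "S \<subseteq> {i. i < m \<and> dN \<le> degree m E i}" and cS: "card S = N"
    by (meson obtain_subset_with_card_n)
  have finS: "finite S" using S by (rule finite_subset, simp)
  define ss where "ss = sorted_list_of_set S"
  have ss: "set ss = S" "length ss = N" "distinct ss" unfolding ss_def using finS cS by auto
  have ssm: "\<And>a. a < N \<Longrightarrow> ss ! a < m" and ssd: "\<And>a. a < N \<Longrightarrow> dN \<le> degree m E (ss ! a)"
    using S ss nth_mem by fastforce+
  have ssinj: "\<And>a b. a < N \<Longrightarrow> b < N \<Longrightarrow> ss ! a = ss ! b \<longleftrightarrow> a = b"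
    using ss by (simp add: nth_eq_iff_index_eq)
  define E' where "E' = (\<lambda>a b. E (ss ! a) (ss ! b))"
  have sg': "simple_graph N E'" using sg ssm unfolding simple_graph_def E'_def by blast
  define A' where "A' = adj_matrix N E'"
  have A': "A' \<in> carrier_mat N N" unfolding A'_def by simp
  obtain X' where X': "X' \<in> carrier_mat N k" and injX': "\<forall>z\<in>carrier_vec k. X' *\<^sub>v z = 0\<^sub>v N \<longrightarrow> z = 0\<^sub>v k"
    and qX': "\<forall>z\<in>carrier_vec k. (X' *\<^sub>v z) \<bullet> (A' *\<^sub>v (X' *\<^sub>v z)) \<le> 0"
    using count_le_construct[OF A' adj_sym[OF sg', folded A'_def] PN[OF le_refl sg', folded A'_def, unfolded num_nonpos_eigs_def]]
    by blast
  define L where "L = laplacian m E"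
  have L: "L \<in> carrier_mat m m" unfolding L_def by simp
  define Pm where "Pm = mat m N (\<lambda>(i,a). if i = ss ! a then 1 else (0::real))"
  have Pm: "Pm \<in> carrier_mat m N" unfolding Pm_def by simp
  have tPm: "transpose_mat Pm \<in> carrier_mat N m" using Pm by simp
  have colP: "\<And>a. a < N \<Longrightarrow> col Pm a = unit_vec m (ss ! a)"
    unfolding Pm_def using ssm by (intro eq_vecI, auto simp: unit_vec_def)
  define Dd where "Dd = mat N N (\<lambda>(a,b). if a = b then real (degree m E (ss ! a)) else 0)"
  have Dd: "Dd \<in> carrier_mat N N" unfolding Dd_def by simp
  have diagDd: "diagonal_mat Dd" unfolding Dd_def diagonal_mat_def by simp
  have PLP: "transpose_mat Pm * L * Pm = Dd - A'"
  proof (rule eq_matI)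
    fix a b assume "a < dim_row (Dd - A')" "b < dim_col (Dd - A')"
    hence a: "a < N" and b: "b < N" using Dd A' by auto
    have "(transpose_mat Pm * L * Pm) $$ (a,b) = L $$ (ss ! a, ss ! b)"
      by (rule sel_entry[OF L Pm colP ssm a b])
    also have "\<dots> = (Dd - A') $$ (a,b)"
      unfolding L_def using lap_entry[OF ssm[OF a] ssm[OF b]] a b Dd A' ssinj[OF a b]
      by (simp add: Dd_def A'_def adj_matrix_def E'_def)
    finally show "(transpose_mat Pm * L * Pm) $$ (a,b) = (Dd - A') $$ (a,b)" .
  qed (insert Dd A' Pm L, auto)
  have PP: "transpose_mat Pm * Pm = 1\<^sub>m N"
  proof (rule eq_matI)
    fix a b assume "a < dim_row (1\<^sub>m N)" "b < dim_col (1\<^sub>m N)"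
    hence a: "a < N" and b: "b < N" by auto
    have "(transpose_mat Pm * Pm) $$ (a,b) = col Pm a \<bullet> col Pm b" using Pm a b by simp
    also have "\<dots> = (if a = b then 1 else 0)" unfolding colP[OF a] colP[OF b]
      using ssm[OF a] ssm[OF b] ssinj[OF a b] by (auto simp: eq_commute[of "ss ! b"])
    finally show "(transpose_mat Pm * Pm) $$ (a,b) = 1\<^sub>m N $$ (a,b)" using a b by simp
  qed (insert Pm, auto)
  define X where "X = Pm * X'"
  have X: "X \<in> carrier_mat m k" unfolding X_def using Pm X' by simp
  have Xz: "\<And>z. z \<in> carrier_vec k \<Longrightarrow> X *\<^sub>v z = Pm *\<^sub>v (X' *\<^sub>v z)" unfolding X_def using Pm X' by simp
  have PtP: "\<And>w. w \<in> carrier_vec N \<Longrightarrow> transpose_mat Pm *\<^sub>v (Pm *\<^sub>v w) = w"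
  proof -
    fix w :: "real vec" assume w: "w \<in> carrier_vec N"
    have "transpose_mat Pm *\<^sub>v (Pm *\<^sub>v w) = (transpose_mat Pm * Pm) *\<^sub>v w"
      using tPm Pm w by (simp add: assoc_mult_mat_vec)
    thus "transpose_mat Pm *\<^sub>v (Pm *\<^sub>v w) = w" using PP w by simp
  qed
  have inj: "\<And>z. z \<in> carrier_vec k \<Longrightarrow> X *\<^sub>v z = 0\<^sub>v m \<Longrightarrow> z = 0\<^sub>v k"
  proof -
    fix z :: "real vec" assume z: "z \<in> carrier_vec k" and X0: "X *\<^sub>v z = 0\<^sub>v m"
    have wc: "X' *\<^sub>v z \<in> carrier_vec N" using X' z by simp
    have "X' *\<^sub>v z = transpose_mat Pm *\<^sub>v (Pm *\<^sub>v (X' *\<^sub>v z))" using PtP[OF wc] by simp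
    also have "\<dots> = transpose_mat Pm *\<^sub>v 0\<^sub>v m" using Xz[OF z] X0 by simp
    also have "\<dots> = 0\<^sub>v N" using tPm by (auto intro!: eq_vecI)
    finally show "z = 0\<^sub>v k" using injX' z by blast
  qed
  have quad: "\<And>z. z \<in> carrier_vec k \<Longrightarrow> dN * ((X *\<^sub>v z) \<bullet> (X *\<^sub>v z)) \<le> (X *\<^sub>v z) \<bullet> (L *\<^sub>v (X *\<^sub>v z))"
  proof -
    fix z :: "real vec" assume z: "z \<in> carrier_vec k"
    define w where "w = X' *\<^sub>v z"
    have w: "w \<in> carrier_vec N" unfolding w_def using X' z by simp
    have x: "X *\<^sub>v z = Pm *\<^sub>v w" unfolding w_def using Xz[OF z] .
    have Pw: "Pm *\<^sub>v w \<in> carrier_vec m" using Pm w by simp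
    have gen: "\<And>v. v \<in> carrier_vec m \<Longrightarrow> (Pm *\<^sub>v w) \<bullet> v = w \<bullet> (transpose_mat Pm *\<^sub>v v)"
    proof -
      fix v :: "real vec" assume v: "v \<in> carrier_vec m"
      have "(transpose_mat Pm *\<^sub>v v) \<bullet> w = v \<bullet> (Pm *\<^sub>v w)"
        by (rule transpose_vec_mult_scalar[OF Pm w v])
      thus "(Pm *\<^sub>v w) \<bullet> v = w \<bullet> (transpose_mat Pm *\<^sub>v v)"
        using comm_scalar_prod[OF v Pw] comm_scalar_prod[OF w, of "transpose_mat Pm *\<^sub>v v"] tPm v
        by simp
    qed
    have xx: "(Pm *\<^sub>v w) \<bullet> (Pm *\<^sub>v w) = w \<bullet> w" using gen[OF Pw] PtP[OF w] by simp
    have "transpose_mat Pm *\<^sub>v (L *\<^sub>v (Pm *\<^sub>v w)) = (transpose_mat Pm * L * Pm) *\<^sub>v w"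
    proof -
      have tPL: "transpose_mat Pm * L \<in> carrier_mat N m" using tPm L by simp
      have "(transpose_mat Pm * L * Pm) *\<^sub>v w = (transpose_mat Pm * L) *\<^sub>v (Pm *\<^sub>v w)"
        by (rule assoc_mult_mat_vec[OF tPL Pm w])
      also have "\<dots> = transpose_mat Pm *\<^sub>v (L *\<^sub>v (Pm *\<^sub>v w))"
        by (rule assoc_mult_mat_vec[OF tPm L Pw])
      finally show ?thesis by simp
    qed
    hence "(Pm *\<^sub>v w) \<bullet> (L *\<^sub>v (Pm *\<^sub>v w)) = w \<bullet> ((Dd - A') *\<^sub>v w)"
      using gen[of "L *\<^sub>v (Pm *\<^sub>v w)"] L Pw unfolding PLP by simp
    also have "\<dots> = w \<bullet> (Dd *\<^sub>v w) - w \<bullet> (A' *\<^sub>v w)"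
      using minus_mult_distrib_mat_vec[OF Dd A' w] scalar_prod_minus_distrib[OF w, of "Dd *\<^sub>v w" "A' *\<^sub>v w"]
        Dd A' w by simp
    finally have eq: "(Pm *\<^sub>v w) \<bullet> (L *\<^sub>v (Pm *\<^sub>v w)) = w \<bullet> (Dd *\<^sub>v w) - w \<bullet> (A' *\<^sub>v w)" .
    have "w \<bullet> (A' *\<^sub>v w) \<le> 0" using qX' z unfolding w_def by blast
    moreover have "dN * (w \<bullet> w) \<le> w \<bullet> (Dd *\<^sub>v w)"
    proof -
      have "w \<bullet> (Dd *\<^sub>v w) = (\<Sum>a\<in>{0..<N}. Dd $$ (a,a) * (w $ a)^2)" by (rule diag_quad[OF Dd diagDd w])
      also have "\<dots> \<ge> (\<Sum>a\<in>{0..<N}. dN * (w $ a)^2)"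
        by (rule sum_mono, insert ssd, auto simp: Dd_def intro!: mult_right_mono)
      also have "(\<Sum>a\<in>{0..<N}. dN * (w $ a)^2) = dN * (w \<bullet> w)"
        using w by (simp add: scalar_prod_def sum_distrib_left power2_eq_square)
      finally show ?thesis .
    qed
    ultimately show "dN * ((X *\<^sub>v z) \<bullet> (X *\<^sub>v z)) \<le> (X *\<^sub>v z) \<bullet> (L *\<^sub>v (X *\<^sub>v z))"
      unfolding x xx eq by simp
  qed
  have cnt: "k \<le> size (filter_mset (\<lambda>x. real dN \<le> x) (eigenvalues_mset L))"
    by (rule count_ge[OF L lap_sym[OF sg, folded L_def] X inj quad])
  define ys where "ys = eigs_desc L"
  have sy: "sorted (rev ys)" unfolding ys_def eigs_desc_def by simp
  have "length (filter (\<lambda>x. real dN \<le> x) ys) = size (filter_mset (\<lambda>x. real dN \<le> x) (eigenvalues_mset L))"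
  proof -
    have "mset (filter (\<lambda>x. real dN \<le> x) ys) = filter_mset (\<lambda>x. real dN \<le> x) (eigenvalues_mset L)"
      unfolding ys_def eigs_desc_def by simp
    thus ?thesis by (metis size_mset)
  qed
  hence "k \<le> length (filter (\<lambda>x. real dN \<le> x) ys)" using cnt by simp
  from desc_nth_ge[OF sy k0 this]
  show ?thesis unfolding ys_def L_def dN_def N_def .
qed

end
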